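(* Let $a>b\geq1$ be coprime integers, $p=a/b$, $\hat n\geq 1$ an integer, $N=(2^b+2)\hat n+2^{a-b}+2^b$. Define $g_0=\mathbf{1}_{(2^b+1)\hat n}\circ\mathbf{0}_{\hat n}\circ\mathbf{0}_{2^{a-b}}\circ\mathbf{1}_{2^b}$ and, for $i\in[2^{a-b}]$, $g_i=\mathbf{0}_{(2^b+2)\hat n}\circ\mathbf{0}_{i-1}\circ 1\circ\mathbf{0}_{2^{a-b}+2^b-i}$, all of length $N$. Then for every $s^*\in\{0,1\}^N$, $\sum_{i=0}^{2^{a-b}} d(s^*,g_i)^p\geq(2^a+2^{a-b})(\hat n+1)^p$.
   Context: $d$ denotes Hamming distance; $\mathbf{0}_\ell,\mathbf{1}_\ell$ are the all-zero/all-one strings of length $\ell$; $\circ$ is concatenation; $[t]=\{1,\dots,t\}$. *)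

theory Defs
  imports Complex_Main
begin

text \<open>Binary strings are lists of booleans (True = 1, False = 0).\<close>

definition hamming :: "bool list \<Rightarrow> bool list \<Rightarrow> nat" where
  "hamming x y = card {i. i < length x \<and> x ! i \<noteq> y ! i}"

abbreviation zeros :: "nat \<Rightarrow> bool list" where "zeros l \<equiv> replicate l False"
abbreviation ones :: "nat \<Rightarrow> bool list" where "ones l \<equiv> replicate l True"

end

theory Submission imports Defs "HOL-Analysis.Analysis" begin

lemma tangent:
  fixes x c p :: real
  assumes "x \<ge> 0" "c > 0" "p \<ge> 1"
  shows "c powr p + p * c powr (p - 1) * (x - c) \<le> x powr p"
proof (cases "x = 0")
  case True
  have "c powr p = c * c powr (p-1)" using assms by (simp add: powr_mult_base)
  then show ?thesis using True assms
    by (simp add: algebra_simps)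
next
  case False
  hence xp: "x > 0" using assms by simp
  have "x powr p - c powr p \<ge> p * c powr (p - 1) * (x - c)"
  proof (rule convex_on_imp_above_tangent[OF powr_convex[OF assms(3)]])
    show "connected {0::real<..}" by simp
    show "c \<in> interior {0<..}" using assms by (simp add: interior_open)
    show "x \<in> {0<..}" using xp by simp
    show "((\<lambda>x. x powr p) has_field_derivative p * c powr (p - 1)) (at c within {0<..})"
      using assms by (auto intro!: derivative_eq_intros)
  qed
  then show ?thesis by simp
qed

lemma ham_alt: "length x = length y \<Longrightarrow> hamming x y = sum_list (map (\<lambda>(u,v). if u = v then 0 else 1) (zip x y))"
proof -
  assume l: "length x = length y"
  have "hamming x y = card {i\<in>{0..<length x}. x!i \<noteq> y!i}" unfolding hamming_def
    by (simp add: Int_def)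
  also have "\<dots> = (\<Sum>i\<in>{0..<length x}. if x!i \<noteq> y!i then 1 else 0)"
    by (simp add: sum.If_cases Int_def)
  also have "\<dots> = sum_list (map (\<lambda>(u,v). if u = v then 0 else 1) (zip x y))"
    using l by (auto simp add: sum_list_sum_nth intro!: sum.cong)
  finally show ?thesis .
qed

lemma ham_app: "length x = length y \<Longrightarrow> length u = length v \<Longrightarrow> hamming (x@u) (y@v) = hamming x y + hamming u v"
  by (simp add: ham_alt)

lemma ham_cons: "length x = length y \<Longrightarrow> hamming (u#x) (v#y) = (if u = v then 0 else 1) + hamming x y"
  by (simp add: ham_alt)

lemma ham_rep: "hamming (replicate k a) (replicate k b) = (if a = b then 0 else k)"
  by (simp add: ham_alt zip_replicate sum_list_replicate)

lemma ham_sym: "length x = length y \<Longrightarrow> hamming x y = hamming y x"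
  unfolding hamming_def by metis

lemma ham_tri: "length x = length y \<Longrightarrow> length y = length z \<Longrightarrow> hamming x z \<le> hamming x y + hamming y z"
proof -
  assume l: "length x = length y" "length y = length z"
  have "{i. i < length x \<and> x ! i \<noteq> z ! i} \<subseteq> {i. i < length x \<and> x ! i \<noteq> y ! i} \<union> {i. i < length y \<and> y ! i \<noteq> z ! i}"
    using l by auto
  hence "hamming x z \<le> card ({i. i < length x \<and> x ! i \<noteq> y ! i} \<union> {i. i < length y \<and> y ! i \<noteq> z ! i})"
    unfolding hamming_def by (intro card_mono) auto
  also have "\<dots> \<le> hamming x y + hamming y z" unfolding hamming_def by (rule card_Un_le)
  finally show ?thesis .
qed

theorem claim2:
  fixes a b nh :: nat and s :: "bool list"
  assumes "b \<ge> 1" and "a > b" and "coprime a b" and "nh \<ge> 1"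
    and "length s = (2^b + 2) * nh + 2^(a-b) + 2^b"
  shows "(\<Sum>i\<in>{0..2^(a-b)}.
            real (hamming s
              (if i = 0
               then ones ((2^b + 1) * nh) @ zeros nh @ zeros (2^(a-b)) @ ones (2^b)
               else zeros ((2^b + 2) * nh) @ zeros (i - 1) @ [True] @ zeros (2^(a-b) + 2^b - i)))
            powr (real a / real b))
         \<ge> (2^a + 2^(a-b)) * (real nh + 1) powr (real a / real b)"
proof -
  define B :: nat where "B = 2^b"
  define m :: nat where "m = 2^(a-b)"
  define n where "n = nh"
  define p :: real where "p = real a / real b"
  define q :: real where "q = real n + 1"
  define g :: "nat \<Rightarrow> bool list" where "g i = (if i = 0
               then ones ((B + 1) * n) @ zeros n @ zeros m @ ones B
               else zeros ((B + 2) * n) @ zeros (i - 1) @ [True] @ zeros (m + B - i))" for i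
  define d :: "nat \<Rightarrow> real" where "d i = real (hamming s (g i))" for i
  define T :: nat where "T = (B+1)*n + B + 1"
  have ls: "length s = (B+2)*n + m + B" using assms(5) unfolding B_def m_def n_def by simp
  have mpos: "m \<ge> 1" unfolding m_def by simp
  have p1: "p \<ge> 1" unfolding p_def using assms(1,2) by simp
  have lg: "length (g i) = length s" if "i \<le> m" for i
    using that ls by (auto simp: g_def algebra_simps)
  have ham0i: "hamming (g 0) (g i) = T" if i: "1 \<le> i" "i \<le> m" for i
  proof -
    have e1: "g i = zeros((B+1)*n) @ zeros n @ (zeros(i-1) @ [True] @ zeros(m-i)) @ zeros B"
    proof -
      have "(B+2)*n = (B+1)*n + n" by simp
      then have a1: "zeros((B+2)*n) = zeros((B+1)*n) @ zeros n" by (metis replicate_add)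
      have "m + B - i = (m-i) + B" using i by simp
      then have a2: "zeros(m + B - i) = zeros(m-i) @ zeros B" by (metis replicate_add)
      show ?thesis using i unfolding g_def a1 a2 by simp
    qed
    have e0: "g 0 = ones((B+1)*n) @ zeros n @ (zeros(i-1) @ [False] @ zeros(m-i)) @ ones B"
    proof -
      have "m = (i-1) + (1 + (m-i))" using i by simp
      then have "zeros m = zeros(i-1) @ [False] @ zeros(m-i)"
        by (metis replicate_add replicate_Suc replicate_0 append_Cons append_Nil plus_1_eq_Suc)
      then show ?thesis unfolding g_def by simp
    qed
    have h1: "hamming [False] [True] = 1" by (simp add: ham_alt)
    have hm: "hamming (zeros(i-1) @ [False] @ zeros(m-i)) (zeros(i-1) @ [True] @ zeros(m-i)) = 1"
      by (subst ham_app, simp, simp)+ (simp add: ham_rep h1)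
    have "hamming (g 0) (g i) = hamming (ones((B+1)*n)) (zeros((B+1)*n)) + (hamming (zeros n) (zeros n)
       + (hamming (zeros(i-1) @ [False] @ zeros(m-i)) (zeros(i-1) @ [True] @ zeros(m-i))
       + hamming (ones B) (zeros B)))"
      unfolding e0 e1 by (subst ham_app, simp, simp)+ (rule refl)
    then show ?thesis unfolding hm ham_rep T_def by simp
  qed
  have pair: "real T \<le> d 0 + d i" if i: "1 \<le> i" "i \<le> m" for i
  proof -
    have l0: "length (g 0) = length s" using lg[of 0] by blast
    have li: "length s = length (g i)" using lg[OF i(2)] by simp
    have "T \<le> hamming (g 0) s + hamming s (g i)"
      using ham0i[OF i] ham_tri[OF l0 li] by linarith
    also have "\<dots> = hamming s (g 0) + hamming s (g i)"
      using ham_sym[OF l0] by linarith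
    finally show ?thesis unfolding d_def by simp
  qed
  have dnn: "d i \<ge> 0" for i unfolding d_def by simp
  have Bm: "real B powr (p - 1) = real m"
  proof -
    have "real B powr (p-1) = (2 powr real b) powr (p-1)" unfolding B_def by (simp add: powr_realpow)
    also have "\<dots> = 2 powr (real b * (p-1))" by (simp add: powr_powr)
    also have "real b * (p-1) = real (a-b)" unfolding p_def using assms(1,2) by (simp add: field_simps of_nat_diff)
    also have "2 powr real (a-b) = real m" unfolding m_def by (simp add: powr_realpow)
    finally show ?thesis .
  qed
  have qpos: "q > 0" unfolding q_def by simp
  have Bpos: "real B > 0" unfolding B_def by simp
  have Bqp: "(real B * q) powr p = real B * real m * q powr p"
  proof -
    have "(real B * q) powr p = real B powr p * q powr p" using qpos Bpos by (simp add: powr_mult)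
    also have "real B powr p = real B * real B powr (p-1)" using Bpos by (simp add: powr_mult_base)
    finally show ?thesis using Bm by simp
  qed
  have Bqp1: "(real B * q) powr (p-1) = real m * q powr (p-1)"
    using qpos Bpos Bm by (simp add: powr_mult)
  have t0: "d 0 powr p \<ge> real B * real m * q powr p + p * (real m * q powr (p-1)) * (d 0 - real B * q)"
    using tangent[OF dnn[of 0] _ p1, of "real B * q"] qpos Bpos Bqp Bqp1 by simp
  have ti: "d i powr p \<ge> q powr p + p * q powr (p-1) * (d i - q)" for i
    using tangent[OF dnn[of i] qpos p1] .
  have S: "(\<Sum>i\<in>{1..m}. d i powr p) \<ge> (\<Sum>i\<in>{1..m}. q powr p + p * q powr (p-1) * (d i - q))"
    by (intro sum_mono ti)
  have S2: "(\<Sum>i\<in>{1..m}. q powr p + p * q powr (p-1) * (d i - q))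
      = real m * q powr p + p * q powr (p-1) * ((\<Sum>i\<in>{1..m}. d i) - real m * q)"
    by (simp add: sum.distrib sum_distrib_left sum_subtractf algebra_simps)
  have S3: "real m * real T \<le> real m * d 0 + (\<Sum>i\<in>{1..m}. d i)"
  proof -
    have "(\<Sum>i\<in>{1..m}. real T) \<le> (\<Sum>i\<in>{1..m}. d 0 + d i)" by (intro sum_mono pair) auto
    then show ?thesis by (simp add: sum.distrib)
  qed
  have Tq: "real T = (real B + 1) * q" unfolding T_def q_def by (simp add: algebra_simps)
  have lin: "0 \<le> p * q powr (p-1) * (real m * d 0 + (\<Sum>i\<in>{1..m}. d i) - real m * real T)"
    using S3 p1 qpos by (intro mult_nonneg_nonneg) auto
  have tot: "(\<Sum>i\<in>{0..m}. d i powr p) = d 0 powr p + (\<Sum>i\<in>{1..m}. d i powr p)"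
    by (simp add: sum.atLeast_Suc_atMost)
  have "(real B * real m + real m) * q powr p \<le> (\<Sum>i\<in>{0..m}. d i powr p)"
    using t0 S S2 lin Tq unfolding tot by (simp add: algebra_simps)
  moreover have "(2^a + 2^(a-b)) = real B * real m + real m"
    unfolding B_def m_def using assms(2) by (simp add: power_add[symmetric])
  ultimately show ?thesis unfolding d_def g_def p_def q_def B_def m_def n_def by simp
qed

end
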